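(* An endomorphism $\varphi$ of a periodic abelian group $A$ is inertial (resp. left-inertial) if and only if its restriction to every primary component $A_p$ of $A$ is inertial (resp. left-inertial) and it acts as a multiplication (resp. an invertible multiplication) on all but finitely many of the primary components $A_p$.
   Context: Abelian groups are written additively. An endomorphism $\varphi$ of $A$ is inertial if $(\varphi(X)+X)/X$ is finite for every subgroup $X\le A$, and left-inertial if $X/(X\cap\varphi(X))$ is finite for every $X\le A$. A multiplication of an abelian $p$-group is the natural action of a $p$-adic integer; it is invertible if it is bijective. Primary components are invariant under every endomorphism. *)

theory Defs
  imports "HOL-Computational_Algebra.Primes"
begin

text \<open>Abelian groups are modelled by a type of class ab_group_add (written additively);
  the group A is the whole type.\<close>

fun nmul :: "nat \<Rightarrow> 'a::ab_group_add \<Rightarrow> 'a" where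
  "nmul 0 a = 0"
| "nmul (Suc n) a = a + nmul n a"

definition zmul :: "int \<Rightarrow> 'a::ab_group_add \<Rightarrow> 'a" where
  "zmul k a = (if 0 \<le> k then nmul (nat k) a else - nmul (nat (- k)) a)"

definition periodic_group :: "'a::ab_group_add itself \<Rightarrow> bool" where
  "periodic_group _ \<longleftrightarrow> (\<forall>a::'a. \<exists>n>0. nmul n a = 0)"

definition subgrp :: "'a::ab_group_add set \<Rightarrow> bool" where
  "subgrp X \<longleftrightarrow> 0 \<in> X \<and> (\<forall>x\<in>X. \<forall>y\<in>X. x - y \<in> X)"

definition endom :: "('a::ab_group_add \<Rightarrow> 'a) \<Rightarrow> bool" where
  "endom f \<longleftrightarrow> (\<forall>x y. f (x + y) = f x + f y)"

definition setsum :: "'a::ab_group_add set \<Rightarrow> 'a set \<Rightarrow> 'a set" where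
  "setsum Y X = {y + x | y x. y \<in> Y \<and> x \<in> X}"

text \<open>The quotient Y/X (for X \<le> Y) is finite: finitely many cosets y + X, y \<in> Y.\<close>
definition finite_quot :: "'a::ab_group_add set \<Rightarrow> 'a set \<Rightarrow> bool" where
  "finite_quot Y X \<longleftrightarrow> finite ((\<lambda>y. (\<lambda>x. y + x) ` X) ` Y)"

definition inertial_on :: "'a::ab_group_add set \<Rightarrow> ('a \<Rightarrow> 'a) \<Rightarrow> bool" where
  "inertial_on S f \<longleftrightarrow> (\<forall>X. subgrp X \<and> X \<subseteq> S \<longrightarrow> finite_quot (setsum (f ` X) X) X)"

definition left_inertial_on :: "'a::ab_group_add set \<Rightarrow> ('a \<Rightarrow> 'a) \<Rightarrow> bool" where
  "left_inertial_on S f \<longleftrightarrow> (\<forall>X. subgrp X \<and> X \<subseteq> S \<longrightarrow> finite_quot X (X \<inter> f ` X))"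

abbreviation inertial :: "('a::ab_group_add \<Rightarrow> 'a) \<Rightarrow> bool" where
  "inertial f \<equiv> inertial_on UNIV f"

abbreviation left_inertial :: "('a::ab_group_add \<Rightarrow> 'a) \<Rightarrow> bool" where
  "left_inertial f \<equiv> left_inertial_on UNIV f"

definition primary :: "nat \<Rightarrow> 'a::ab_group_add set" where
  "primary p = {a. \<exists>n. nmul (p ^ n) a = 0}"

text \<open>p-adic integers as coherent sequences of residues mod p^n.\<close>
definition padic_int :: "nat \<Rightarrow> (nat \<Rightarrow> int) \<Rightarrow> bool" where
  "padic_int p \<alpha> \<longleftrightarrow> (\<forall>n. 0 \<le> \<alpha> n \<and> \<alpha> n < int p ^ n \<and> \<alpha> (Suc n) mod (int p ^ n) = \<alpha> n)"

definition is_multiplication_on :: "nat \<Rightarrow> ('a::ab_group_add \<Rightarrow> 'a) \<Rightarrow> bool" where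
  "is_multiplication_on p f \<longleftrightarrow> (\<exists>\<alpha>. padic_int p \<alpha> \<and>
     (\<forall>b n. nmul (p ^ n) b = 0 \<longrightarrow> f b = zmul (\<alpha> n) b))"

definition is_inv_multiplication_on :: "nat \<Rightarrow> ('a::ab_group_add \<Rightarrow> 'a) \<Rightarrow> bool" where
  "is_inv_multiplication_on p f \<longleftrightarrow> is_multiplication_on p f \<and> bij_betw f (primary p) (primary p)"

end

theory Submission
  imports Defs "HOL-Library.FuncSet"
begin


lemma nmul_add: "nmul (m+n) a = nmul m a + nmul n a"
  by (induct m) (simp_all add: add.assoc)

lemma nmul_zero[simp]: "nmul n (0::'a::ab_group_add) = 0"
  by (induct n) simp_all

lemma nmul_distrib: "nmul n (a+b) = nmul n a + nmul n (b::'a::ab_group_add)"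
  by (induct n) (simp_all add: algebra_simps)

lemma nmul_minus: "nmul n (-a) = - nmul n (a::'a::ab_group_add)"
  by (induct n) (simp_all add: algebra_simps)

lemma nmul_mult: "nmul (m*n) a = nmul m (nmul n (a::'a::ab_group_add))"
  by (induct m) (simp_all add: nmul_add)

lemma nmul_one[simp]: "nmul 1 a = a"
  by simp

lemma zmul_repr: "zmul k a = nmul (nat k) a - nmul (nat (-k)) a"
  by (simp add: zmul_def)

lemma zmul_diff_nat: "zmul (int m - int n) a = nmul m a - nmul n a"
proof (cases "n \<le> m")
  case True
  then have e: "int m - int n = int (m - n)" by simp
  have "nmul m a = nmul (m-n) a + nmul n a" using True nmul_add[of "m-n" n a] by simp
  then show ?thesis unfolding e zmul_def by simp
next
  case False
  then have e: "int m - int n = - int (n - m)" by simp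
  have "nmul n a = nmul (n-m) a + nmul m a" using False nmul_add[of "n-m" m a] by simp
  moreover have "\<not> 0 \<le> - int (n - m)" "nat (- (- int (n - m))) = n - m" using False by simp_all
  ultimately show ?thesis unfolding e zmul_def by (simp only: if_False) (simp add: algebra_simps)
qed

lemma int_repr: "k = int (nat k) - int (nat (-k))"
  by simp

lemma zmul_add: "zmul (k + l) a = zmul k a + zmul l a"
proof -
  have "k + l = int (nat k + nat l) - int (nat (-k) + nat (-l))" by simp
  then have "zmul (k+l) a = nmul (nat k + nat l) a - nmul (nat (-k) + nat (-l)) a"
    by (metis zmul_diff_nat)
  then show ?thesis by (simp add: zmul_repr nmul_add)
qed

lemma zmul_of_nat[simp]: "zmul (int n) a = nmul n a"
  by (simp add: zmul_def)

lemma zmul_0[simp]: "zmul 0 a = 0" by (simp add: zmul_def)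
lemma zmul_1[simp]: "zmul 1 a = a" by (simp add: zmul_def)
lemma zmul_zero[simp]: "zmul k (0::'a::ab_group_add) = 0" by (simp add: zmul_def)

lemma zmul_neg: "zmul (-k) a = - zmul k a"
  by (simp add: zmul_repr)

lemma zmul_diff: "zmul (k - l) a = zmul k a - zmul l a"
  using zmul_add[of k "-l" a] zmul_neg[of l a] by simp

lemma zmul_distrib: "zmul k (a + b) = zmul k a + zmul k (b::'a::ab_group_add)"
  by (simp add: zmul_repr nmul_distrib algebra_simps)

lemma zmul_minus: "zmul k (- a) = - zmul k (a::'a::ab_group_add)"
  by (simp add: zmul_repr nmul_minus algebra_simps)

lemma zmul_sub: "zmul k (a - b) = zmul k a - zmul k (b::'a::ab_group_add)"
  using zmul_distrib[of k a "-b"] zmul_minus[of k b] by simp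

lemma zmul_nat_mult: "zmul (int m * l) a = nmul m (zmul l a)"
  by (induct m) (simp_all add: zmul_add algebra_simps)

lemma zmul_mult: "zmul (k * l) a = zmul k (zmul l a)"
proof -
  have "k * l = int (nat k) * l - int (nat (-k)) * l"
    using int_repr[of k] by (simp only: left_diff_distrib[symmetric])
  then have "zmul (k*l) a = zmul (int (nat k) * l) a - zmul (int (nat (-k)) * l) a"
    using zmul_diff by metis
  also have "\<dots> = nmul (nat k) (zmul l a) - nmul (nat (-k)) (zmul l a)"
    by (simp only: zmul_nat_mult)
  also have "\<dots> = zmul k (zmul l a)" by (simp only: zmul_repr[of k "zmul l a"])
  finally show ?thesis .
qed

lemma zmul_sum: "zmul k (sum g F) = (\<Sum>x\<in>F. zmul k (g x))"
  by (induct F rule: infinite_finite_induct) (simp_all add: zmul_distrib)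

lemma zmul_power_nmul: "zmul (int p ^ n) a = nmul (p ^ n) a"
  by (metis of_nat_power zmul_of_nat)

lemma endom_0: "endom f \<Longrightarrow> f 0 = 0"
  unfolding endom_def by (metis add_cancel_right_right add_0)

lemma endom_minus: "endom f \<Longrightarrow> f (- a) = - f a"
  unfolding endom_def by (metis add.right_inverse add_eq_0_iff endom_0 endom_def)

lemma endom_diff: "endom f \<Longrightarrow> f (a - b) = f a - f b"
  using endom_minus[of f b] unfolding endom_def by (metis diff_conv_add_uminus)

lemma endom_add: "endom f \<Longrightarrow> f (a + b) = f a + f b"
  by (simp add: endom_def)

lemma endom_nmul: "endom f \<Longrightarrow> f (nmul n a) = nmul n (f a)"
  by (induct n) (simp_all add: endom_0 endom_add)

lemma endom_zmul: "endom f \<Longrightarrow> f (zmul k a) = zmul k (f a)"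
  by (simp add: zmul_repr endom_diff endom_nmul)

lemma endom_sum: "endom f \<Longrightarrow> f (sum g F) = (\<Sum>x\<in>F. f (g x))"
  by (induct F rule: infinite_finite_induct) (simp_all add: endom_0 endom_add)

lemma zmul_cong_mod:
  assumes "nmul (p ^ n) b = 0" "(int p ^ n) dvd (k - l)"
  shows "zmul k b = zmul l b"
proof -
  obtain t where t: "k - l = int p ^ n * t" using assms(2) by (auto simp: dvd_def)
  have "zmul (k - l) b = zmul t (zmul (int p ^ n) b)" by (simp add: t zmul_mult mult.commute)
  also have "\<dots> = 0" using assms(1) by (simp add: zmul_power_nmul)
  finally show ?thesis by (simp add: zmul_diff)
qed



abbreviation kill :: "nat \<Rightarrow> nat \<Rightarrow> 'a::ab_group_add \<Rightarrow> bool" where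
  "kill p n b \<equiv> nmul (p ^ n) b = 0"

lemma kill_mono: "kill p m b \<Longrightarrow> m \<le> n \<Longrightarrow> kill p n b"
proof -
  assume a: "kill p m b" "m \<le> n"
  have "p ^ n = p ^ (n - m) * p ^ m" using a(2) by (simp add: power_add[symmetric])
  then show ?thesis using a(1) by (simp add: nmul_mult)
qed

lemma primary_iff: "b \<in> primary p \<longleftrightarrow> (\<exists>n. kill p n b)"
  by (simp add: primary_def)

lemma kill_zmul: "kill p n b \<Longrightarrow> kill p n (zmul k b)"
proof -
  assume "kill p n b"
  then have "zmul k (zmul (int p ^ n) b) = 0" by (simp add: zmul_power_nmul)
  then have "zmul (k * int p ^ n) b = 0" by (simp only: zmul_mult)
  then have "zmul (int p ^ n) (zmul k b) = 0" by (simp only: zmul_mult[symmetric] mult.commute)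
  then show ?thesis by (simp add: zmul_power_nmul)
qed

lemma kill_add: "kill p n a \<Longrightarrow> kill p n b \<Longrightarrow> kill p n (a + b)"
  by (simp add: nmul_distrib)

lemma kill_diff: "kill p n a \<Longrightarrow> kill p n b \<Longrightarrow> kill p n (a - b)"
  using kill_add[of p n a "-b"] by (simp add: nmul_minus)

lemma kill_endom: "endom f \<Longrightarrow> kill p n b \<Longrightarrow> kill p n (f b)"
  by (metis endom_0 endom_nmul)

lemma primary_zero[simp]: "0 \<in> primary p"
  by (auto simp: primary_iff)

lemma primary_add: "a \<in> primary p \<Longrightarrow> b \<in> primary p \<Longrightarrow> a + b \<in> primary p"
  unfolding primary_iff
  using kill_add kill_mono max.cobounded1 max.cobounded2 by metis

lemma primary_diff: "a \<in> primary p \<Longrightarrow> b \<in> primary p \<Longrightarrow> a - b \<in> primary p"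
  unfolding primary_iff
  using kill_diff kill_mono max.cobounded1 max.cobounded2 by metis

lemma primary_zmul: "a \<in> primary p \<Longrightarrow> zmul k a \<in> primary p"
  unfolding primary_iff using kill_zmul by blast

lemma primary_endom: "endom f \<Longrightarrow> a \<in> primary p \<Longrightarrow> f a \<in> primary p"
  unfolding primary_iff using kill_endom by blast

lemma subgrp_primary: "subgrp (primary p)"
  by (simp add: subgrp_def primary_diff)

lemma subgrpD0: "subgrp X \<Longrightarrow> 0 \<in> X" by (simp add: subgrp_def)
lemma subgrp_diff: "subgrp X \<Longrightarrow> a \<in> X \<Longrightarrow> b \<in> X \<Longrightarrow> a - b \<in> X" by (simp add: subgrp_def)
lemma subgrp_minus: "subgrp X \<Longrightarrow> a \<in> X \<Longrightarrow> - a \<in> X"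
  by (metis subgrp_def diff_0)
lemma subgrp_add: "subgrp X \<Longrightarrow> a \<in> X \<Longrightarrow> b \<in> X \<Longrightarrow> a + b \<in> X"
  by (metis subgrp_diff subgrp_minus diff_minus_eq_add)
lemma subgrp_nmul: "subgrp X \<Longrightarrow> a \<in> X \<Longrightarrow> nmul n a \<in> X"
  by (induct n) (simp_all add: subgrpD0 subgrp_add)
lemma subgrp_zmul: "subgrp X \<Longrightarrow> a \<in> X \<Longrightarrow> zmul k a \<in> X"
  by (simp add: zmul_repr subgrp_diff subgrp_nmul)
lemma subgrp_sum: "subgrp X \<Longrightarrow> (\<And>x. x \<in> F \<Longrightarrow> g x \<in> X) \<Longrightarrow> sum g F \<in> X"
  by (induct F rule: infinite_finite_induct) (simp_all add: subgrpD0 subgrp_add)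
lemma subgrp_Int: "subgrp X \<Longrightarrow> subgrp Y \<Longrightarrow> subgrp (X \<inter> Y)"
  by (simp add: subgrp_def)
lemma subgrp_image: "endom f \<Longrightarrow> subgrp X \<Longrightarrow> subgrp (f ` X)"
proof -
  assume f: "endom f" and X: "subgrp X"
  show ?thesis unfolding subgrp_def
  proof (intro conjI ballI)
    show "0 \<in> f ` X" using X subgrpD0 endom_0[OF f] by (metis image_eqI)
    fix x y assume "x \<in> f ` X" "y \<in> f ` X"
    then obtain a b where "a \<in> X" "b \<in> X" "x = f a" "y = f b" by blast
    then show "x - y \<in> f ` X" using endom_diff[OF f, of a b] subgrp_diff[OF X] by (metis image_eqI)
  qed
qed

lemma gcd_primepow:
  assumes "prime p"
  shows "\<exists>i\<le>m. gcd d (int p ^ m) = int p ^ i"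
proof -
  have pr: "prime (int p)" using assms by simp
  have "gcd d (int p ^ m) dvd int p ^ m" by simp
  then obtain i where "i \<le> m" "normalize (gcd d (int p ^ m)) = int p ^ i"
    using divides_primepow[OF pr] by metis
  then show ?thesis by auto
qed

lemma exact_dvd:
  assumes p: "prime p" and k: "kill p m a" and nk: "\<not> kill p (m - 1) a" and m: "m \<ge> 1"
    and d: "zmul d a = 0"
  shows "int p ^ m dvd d"
proof -
  obtain i where i: "i \<le> m" "gcd d (int p ^ m) = int p ^ i" using gcd_primepow[OF p] by blast
  obtain u v where uv: "u * d + v * int p ^ m = gcd d (int p ^ m)" using bezout_int by blast
  have "zmul (gcd d (int p ^ m)) a = 0"
    by (simp add: uv[symmetric] zmul_add zmul_mult d zmul_power_nmul k)
  then have ki: "kill p i a" using i(2) by (simp add: zmul_power_nmul)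
  have "i = m"
  proof (rule ccontr)
    assume "i \<noteq> m" then have "i \<le> m - 1" using i by simp
    then show False using kill_mono[OF ki] nk by blast
  qed
  then show ?thesis using i(2) by (metis gcd_dvd1)
qed

lemma exact_gen:
  assumes p: "prime p" and k: "kill p (Suc j) b" and nk: "\<not> kill p j b"
    and d: "zmul d b \<noteq> 0"
  shows "\<exists>t. zmul t (zmul d b) = nmul (p ^ j) b"
proof -
  obtain i where i: "i \<le> Suc j" "gcd d (int p ^ Suc j) = int p ^ i" using gcd_primepow[OF p] by blast
  obtain u v where uv: "u * d + v * int p ^ Suc j = gcd d (int p ^ Suc j)" using bezout_int by blast
  have "zmul (gcd d (int p ^ Suc j)) b = zmul u (zmul d b)"
    unfolding uv[symmetric] zmul_add zmul_mult zmul_power_nmul using k by simp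
  then have g: "zmul (int p ^ i) b = zmul u (zmul d b)" using i(2) by simp
  have "i \<noteq> Suc j"
  proof
    assume "i = Suc j"
    then have "int p ^ Suc j dvd d" using i(2) by (metis gcd_dvd1)
    then have "int p ^ Suc j dvd d - 0" by simp
    then have "zmul d b = zmul 0 b" using zmul_cong_mod[OF k] by blast
    then show False using d by simp
  qed
  then have ij: "i \<le> j" using i by simp
  have "nmul (p ^ j) b = zmul (int p ^ (j - i) * int p ^ i) b"
    using ij by (simp add: power_add[symmetric] zmul_power_nmul)
  also have "\<dots> = zmul (int p ^ (j - i) * u) (zmul d b)"
    by (simp add: zmul_mult g)
  finally show ?thesis by metis
qed

lemma coprime_inv:
  assumes "kill p n y" "coprime N (int p)"
  shows "\<exists>M. zmul (M * N) y = y"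
proof -
  have "coprime N (int p ^ n)" using assms(2) by simp
  then obtain u v where uv: "u * N + v * int p ^ n = 1" using bezout_int[of N "int p ^ n"] by auto
  have e: "u * N = 1 - v * int p ^ n" using uv by simp
  have "zmul (u * N) y = zmul 1 y - zmul v (zmul (int p ^ n) y)" unfolding e zmul_diff zmul_mult ..
  also have "\<dots> = y" by (simp add: zmul_power_nmul assms(1))
  finally show ?thesis by blast
qed



lemma power_level:
  assumes p: "prime p" and f: "endom f"
    and pw: "\<And>a. a \<in> primary p \<Longrightarrow> \<exists>k. f a = zmul k a"
  shows "\<exists>k. \<forall>b. kill p n b \<longrightarrow> f b = zmul k b"
proof -
  define K where "K = {j. \<forall>b::'a. kill p n b \<longrightarrow> kill p j b}"
  have nK: "n \<in> K" by (simp add: K_def)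
  define m where "m = (LEAST j. j \<in> K)"
  have mK: "m \<in> K" using nK unfolding m_def by (rule LeastI)
  show ?thesis
  proof (cases "m = 0")
    case True
    then have "\<forall>b. kill p n b \<longrightarrow> f b = zmul 0 b" using mK by (auto simp: K_def endom_0[OF f])
    then show ?thesis by blast
  next
    case False
    then have "m - 1 \<notin> K" unfolding m_def by (metis diff_less m_def not_less_Least zero_less_one neq0_conv)
    then obtain a :: 'a where an: "kill p n a" and anm: "\<not> kill p (m - 1) a" by (auto simp: K_def)
    have am: "kill p m a" using mK an by (simp add: K_def)
    have m1: "m \<ge> 1" using False by simp
    have ap: "a \<in> primary p" using an by (auto simp: primary_iff)
    obtain k where fk: "f a = zmul k a" using pw[OF ap] by blast
    have main: "\<forall>b. kill p n b \<and> kill p j b \<longrightarrow> f b = zmul k b" for j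
    proof (induct j)
      case 0
      then show ?case by (simp add: endom_0 f)
    next
      case (Suc j)
      show ?case
      proof (intro allI impI)
        fix b :: 'a assume bb: "kill p n b \<and> kill p (Suc j) b"
        show "f b = zmul k b"
        proof (cases "kill p j b")
          case True then show ?thesis using Suc bb by blast
        next
          case nkj: False
          have bm: "kill p m b" using mK bb by (simp add: K_def)
          have jm: "j < m"
          proof (rule ccontr)
            assume "\<not> j < m" then have "m \<le> j" by simp
            then show False using kill_mono[OF bm] nkj by blast
          qed
          define w where "w = nmul (p ^ j) b"
          have bp: "b \<in> primary p" using bb by (auto simp: primary_iff)
          show ?thesis
          proof (cases "\<exists>r. w = zmul r a")
            case True
            then obtain r where r: "w = zmul r a" by blast
            have "zmul (int p * r) a = nmul p w" by (simp add: r zmul_mult)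
            also have "\<dots> = nmul (p ^ Suc j) b" by (simp add: w_def nmul_mult)
            also have "\<dots> = 0" using bb by simp
            finally have "int p ^ m dvd int p * r" using exact_dvd[OF p am anm m1] by blast
            moreover have "int p ^ m = int p * int p ^ (m - 1)" using m1 by (metis power_eq_if False)
            ultimately have "int p ^ (m - 1) dvd r" using p
              by (metis dvd_mult_cancel_left of_nat_eq_0_iff prime_gt_0_nat less_irrefl)
            then obtain v where v: "r = int p ^ (m - 1) * v" by (auto simp: dvd_def)
            define c where "c = v * int p ^ (m - 1 - j)"
            define b0 where "b0 = b - zmul c a"
            have "zmul (int p ^ j * c) a = zmul r a"
              using jm by (simp add: c_def v algebra_simps power_add[symmetric])
            then have "kill p j b0"
              by (simp add: b0_def zmul_power_nmul[symmetric] zmul_sub zmul_mult[symmetric] r[symmetric] w_def)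
            moreover have "kill p n b0" using bb an by (simp add: b0_def kill_diff kill_zmul)
            ultimately have "f b0 = zmul k b0" using Suc by blast
            moreover have "b = b0 + zmul c a" by (simp add: b0_def)
            ultimately show ?thesis
              by (simp add: endom_add[OF f] endom_zmul[OF f] fk zmul_distrib zmul_mult[symmetric] mult.commute)
          next
            case False
            obtain kb where kb: "f b = zmul kb b" using pw[OF bp] by blast
            have abp: "a + b \<in> primary p" using ap bp by (rule primary_add)
            obtain c where c: "f (a + b) = zmul c (a + b)" using pw[OF abp] by blast
            have eq: "zmul (c - k) a = zmul (kb - c) b"
              using c by (simp add: endom_add[OF f] fk kb zmul_distrib zmul_diff algebra_simps)
            have db: "zmul (kb - c) b = 0"
            proof (rule ccontr)
              assume ne: "zmul (kb - c) b \<noteq> 0"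
              obtain t where "zmul t (zmul (kb - c) b) = w"
                using exact_gen[OF p _ nkj ne] bb w_def by blast
              then have "w = zmul (t * (c - k)) a" by (simp add: zmul_mult eq)
              then show False using False by blast
            qed
            then have "int p ^ m dvd (c - k)" using exact_dvd[OF p am anm m1] eq by simp
            then have "zmul c b = zmul k b" using zmul_cong_mod[OF bm] by blast
            moreover have "zmul kb b = zmul c b" using db by (simp add: zmul_diff)
            ultimately show ?thesis using kb by simp
          qed
        qed
      qed
    qed
    have "\<forall>b. kill p n b \<longrightarrow> f b = zmul k b" using main by blast
    then show ?thesis by blast
  qed
qed



lemma valid_mod:
  fixes f :: "'a::ab_group_add \<Rightarrow> 'a"
  assumes "\<forall>b. kill p n b \<longrightarrow> f b = zmul k b"
  shows "\<forall>b. kill p n b \<longrightarrow> f b = zmul (k mod (int p ^ n)) b"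
proof (intro allI impI)
  fix b :: 'a assume b: "kill p n b"
  have "int p ^ n dvd k - k mod (int p ^ n)" by (rule dvd_minus_mod)
  then show "f b = zmul (k mod (int p ^ n)) b" using assms b zmul_cong_mod[OF b] by metis
qed

lemma padic_mod:
  assumes "prime p"
  shows "padic_int p (\<lambda>n. k mod (int p ^ n))"
proof -
  have pos: "0 < int p ^ n" for n using assms by (simp add: prime_gt_0_nat)
  have "int p ^ n dvd int p ^ Suc n" for n by simp
  then show ?thesis unfolding padic_int_def using pos
    by (simp add: mod_mod_cancel del: power_Suc)
qed

lemma ex_exact:
  fixes dummy :: "'a::ab_group_add"
  assumes p: "prime p" and unb: "\<forall>N. \<exists>b::'a. b \<in> primary p \<and> \<not> kill p N b"
  shows "\<exists>a::'a. kill p n a \<and> (\<forall>d. zmul d a = 0 \<longrightarrow> int p ^ n dvd d)"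
proof (cases "n = 0")
  case True
  then show ?thesis by (intro exI[of _ 0]) simp
next
  case False
  obtain b :: 'a where b: "b \<in> primary p" "\<not> kill p n b" using unb by blast
  obtain M where M: "kill p M b" using b(1) by (auto simp: primary_iff)
  define M0 where "M0 = (LEAST M. kill p M b)"
  have M0: "kill p M0 b" unfolding M0_def using M by (rule LeastI)
  have nM0: "n < M0"
  proof (rule ccontr)
    assume "\<not> n < M0" then have "M0 \<le> n" by simp
    then show False using kill_mono[OF M0] b(2) by blast
  qed
  have nk: "\<not> kill p (M0 - 1) b"
  proof
    assume "kill p (M0 - 1) b"
    then have "M0 \<le> M0 - 1" unfolding M0_def by (rule Least_le)
    then show False using nM0 by simp
  qed
  define a where "a = nmul (p ^ (M0 - n)) b"
  have ka: "kill p n a"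
    unfolding a_def nmul_mult[symmetric] power_add[symmetric] using nM0 M0 by simp
  have nka: "\<not> kill p (n - 1) a"
  proof -
    have "nmul (p ^ (n - 1)) a = nmul (p ^ (M0 - 1)) b"
      unfolding a_def nmul_mult[symmetric] power_add[symmetric] using nM0 False
      by (simp add: algebra_simps)
    then show ?thesis using nk by simp
  qed
  have "\<forall>d. zmul d a = 0 \<longrightarrow> int p ^ n dvd d"
    using exact_dvd[OF p ka nka] False by simp
  then show ?thesis using ka by blast
qed

lemma power_mult:
  assumes p: "prime p" and f: "endom f"
    and pw: "\<And>a. a \<in> primary p \<Longrightarrow> \<exists>k. f a = zmul k a"
  shows "is_multiplication_on p f"
proof (cases "\<exists>N. \<forall>b::'a. b \<in> primary p \<longrightarrow> kill p N b")
  case True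
  then obtain N where N: "\<forall>b::'a. b \<in> primary p \<longrightarrow> kill p N b" by blast
  obtain k where k: "\<forall>b. kill p N b \<longrightarrow> f b = zmul k b" using power_level[OF p f pw] by blast
  have "\<forall>b. kill p n b \<longrightarrow> f b = zmul k b" for n
    using k N by (auto simp: primary_iff)
  then have "\<forall>b. kill p n b \<longrightarrow> f b = zmul (k mod (int p ^ n)) b" for n
    by (rule valid_mod)
  then show ?thesis unfolding is_multiplication_on_def using padic_mod[OF p, of k] by blast
next
  case False
  then have unb: "\<forall>N. \<exists>b::'a. b \<in> primary p \<and> \<not> kill p N b" by blast
  define \<beta> where "\<beta> n = (SOME k. \<forall>b::'a. kill p n b \<longrightarrow> f b = zmul k b)" for n
  have \<beta>: "\<forall>b. kill p n b \<longrightarrow> f b = zmul (\<beta> n) b" for n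
    unfolding \<beta>_def using power_level[OF p f pw, of n] by (rule someI_ex)
  define \<alpha> where "\<alpha> n = \<beta> n mod (int p ^ n)" for n
  have \<alpha>: "\<forall>b. kill p n b \<longrightarrow> f b = zmul (\<alpha> n) b" for n
    unfolding \<alpha>_def using \<beta> by (rule valid_mod)
  have pos: "0 < int p ^ n" for n using p by (simp add: prime_gt_0_nat)
  have coh: "\<alpha> (Suc n) mod (int p ^ n) = \<alpha> n" for n
  proof -
    obtain a :: 'a where a: "kill p n a" "\<forall>d. zmul d a = 0 \<longrightarrow> int p ^ n dvd d"
      using ex_exact[OF p unb] by blast
    define x where "x = \<alpha> (Suc n) mod (int p ^ n)"
    have ka: "kill p (Suc n) a" using kill_mono[OF a(1), of "Suc n"] by (simp del: power_Suc)
    have "f a = zmul (\<alpha> (Suc n)) a" using \<alpha> ka by blast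
    also have "\<dots> = zmul x a" unfolding x_def by (rule zmul_cong_mod[OF a(1) dvd_minus_mod])
    finally have "zmul x a = zmul (\<alpha> n) a" using \<alpha>[of n] a(1) by simp
    then have "zmul (x - \<alpha> n) a = 0" by (simp add: zmul_diff)
    then have "int p ^ n dvd x - \<alpha> n" using a(2) by blast
    then have "x mod (int p ^ n) = \<alpha> n mod (int p ^ n)" by (simp add: mod_eq_dvd_iff)
    then show ?thesis unfolding x_def \<alpha>_def by simp
  qed
  have "padic_int p \<alpha>"
    unfolding padic_int_def using coh pos by (simp add: \<alpha>_def del: power_Suc)
  then show ?thesis unfolding is_multiplication_on_def using \<alpha> by blast
qed



lemma decomp_aux:
  fixes x :: "'a::ab_group_add"
  shows "0 < n \<Longrightarrow> nmul n x = 0 \<Longrightarrow> \<exists>S c. finite S \<and>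
     (\<forall>p\<in>S. prime p \<and> c p \<in> primary p \<and> (\<exists>k. c p = zmul k x)) \<and> x = sum c S"
proof (induct n arbitrary: x rule: less_induct)
  case (less n)
  show ?case
  proof (cases "n = 1")
    case True
    then have "x = sum (\<lambda>_. 0) {}" using less.prems by simp
    then show ?thesis by blast
  next
    case False
    obtain p where p: "prime p" "p dvd n" using prime_factor_nat[OF False] by blast
    obtain m where m: "n = p ^ multiplicity p n * m" "\<not> p dvd m"
    proof (rule multiplicity_decompose'[of n p])
      show "n \<noteq> 0" using less.prems(1) by simp
      show "\<not> is_unit p" using prime_gt_1_nat[OF p(1)] by simp
    qed
    define e where "e = multiplicity p n"
    have ne: "n = p ^ e * m" using m e_def by simp
    have e0: "e \<noteq> 0"
    proof
      assume "e = 0" then have "n = m" using ne by simp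
      then show False using m(2) p(2) by simp
    qed
    have m0: "0 < m" using ne less.prems(1) by (cases "m = 0") simp_all
    show ?thesis
    proof (cases "m = 1")
      case True
      then have "kill p e x" using ne less.prems by simp
      then have xp: "x \<in> primary p" by (auto simp: primary_iff)
      have "x = sum (\<lambda>_. x) {p}" by simp
      moreover have "\<exists>k. x = zmul k x" by (intro exI[of _ 1]) simp
      ultimately show ?thesis using xp p(1) by (intro exI[of _ "{p}"] exI[of _ "\<lambda>_. x"]) auto
    next
      case False
      have "p ^ e \<ge> p" using e0 prime_gt_1_nat[OF p(1)] by (intro self_le_power) simp_all
      moreover have "p > 1" using p(1) by (rule prime_gt_1_nat)
      ultimately have "p ^ e > 1" by linarith
      then have mn: "m < n" using ne m0 by simp
      have "coprime p m" using p(1) m(2) by (rule prime_imp_coprime)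
      then have "coprime (int p ^ e) (int m)" by simp
      then obtain u v where uv: "u * int p ^ e + v * int m = 1"
        using bezout_int[of "int p ^ e" "int m"] by auto
      define y where "y = zmul (u * int p ^ e) x"
      define z where "z = zmul (v * int m) x"
      have xyz: "x = y + z" unfolding y_def z_def zmul_add[symmetric] uv by simp
      have nn: "zmul (int n) x = 0" using less.prems by simp
      have "nmul m y = zmul (int m * (u * int p ^ e)) x" by (simp add: y_def zmul_mult)
      also have "\<dots> = zmul u (zmul (int n) x)" unfolding ne zmul_mult[symmetric]
        by (simp add: algebra_simps)
      finally have my: "nmul m y = 0" using nn by simp
      obtain S c where S: "finite S" "\<forall>q\<in>S. prime q \<and> c q \<in> primary q \<and> (\<exists>k. c q = zmul k y)"
        "y = sum c S" using less.hyps[OF mn m0 my] by blast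
      have "zmul (int p ^ e) z = zmul v (zmul (int n) x)" unfolding z_def ne zmul_mult[symmetric]
        by (simp add: algebra_simps)
      then have "kill p e z" using nn by (simp add: zmul_power_nmul)
      then have zp: "z \<in> primary p" by (auto simp: primary_iff)
      define c0 where "c0 = (if p \<in> S then c p else 0)"
      define c' where "c' = c(p := c0 + z)"
      have sumS: "sum c S = c0 + sum c (S - {p})"
        unfolding c0_def using S(1) by (cases "p \<in> S") (simp_all add: sum.remove)
      have "sum c' (insert p S) = c' p + sum c' (S - {p})"
        using S(1) by (simp add: sum.insert_remove)
      also have "sum c' (S - {p}) = sum c (S - {p})" by (rule sum.cong) (auto simp: c'_def)
      finally have sx: "x = sum c' (insert p S)" using xyz S(3) sumS by (simp add: c'_def algebra_simps)
      have c0p: "c0 \<in> primary p" using S(2) by (simp add: c0_def)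
      have c0k: "\<exists>k. c0 = zmul k y" using S(2) unfolding c0_def by (auto intro: exI[of _ 0])
      have yk: "\<And>k. zmul k y = zmul (k * (u * int p ^ e)) x" by (simp add: y_def zmul_mult)
      have "\<forall>q\<in>insert p S. prime q \<and> c' q \<in> primary q \<and> (\<exists>k. c' q = zmul k x)"
      proof
        fix q assume q: "q \<in> insert p S"
        show "prime q \<and> c' q \<in> primary q \<and> (\<exists>k. c' q = zmul k x)"
        proof (cases "q = p")
          case True
          obtain k where k: "c0 = zmul k y" using c0k by blast
          have "c' q = zmul (k * (u * int p ^ e) + v * int m) x"
            using True by (simp add: c'_def k yk zmul_add z_def)
          then show ?thesis using True p(1) primary_add[OF c0p zp] by (auto simp: c'_def)
        next
          case False
          then have qS: "q \<in> S" using q by simp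
          obtain k where "c q = zmul k y" using S(2) qS by blast
          then show ?thesis using False S(2) qS yk by (auto simp: c'_def)
        qed
      qed
      then show ?thesis using sx S(1) by (intro exI[of _ "insert p S"] exI[of _ c']) auto
    qed
  qed
qed

lemma decomp:
  fixes x :: "'a::ab_group_add"
  assumes "periodic_group TYPE('a)"
  shows "\<exists>S c. finite S \<and>
     (\<forall>p\<in>S. prime p \<and> c p \<in> primary p \<and> (\<exists>k. c p = zmul k x)) \<and> x = sum c S"
proof -
  obtain n where "n > 0" "nmul n x = 0" using assms by (auto simp: periodic_group_def)
  then show ?thesis by (rule decomp_aux)
qed

lemma proj:
  fixes b :: "nat \<Rightarrow> 'a::ab_group_add"
  assumes F: "finite F" and b: "\<forall>r\<in>F. prime r \<and> b r \<in> primary r" and p: "prime p"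
  shows "\<exists>N. coprime N (int p) \<and> zmul N (sum b F) = zmul N (if p \<in> F then b p else 0)"
  using F b
proof (induct F rule: finite_induct)
  case empty
  then show ?case by (intro exI[of _ 1]) simp
next
  case (insert r F)
  obtain N where N: "coprime N (int p)" "zmul N (sum b F) = zmul N (if p \<in> F then b p else 0)"
    using insert by auto
  have sb: "sum b (insert r F) = b r + sum b F" using insert by simp
  show ?case
  proof (cases "r = p")
    case True
    then show ?thesis using N insert(2) sb by (intro exI[of _ N]) (simp add: zmul_distrib)
  next
    case False
    have rp: "prime r" "b r \<in> primary r" using insert by auto
    obtain t where t: "kill r t (b r)" using rp(2) by (auto simp: primary_iff)
    have "coprime r p" using rp(1) p False by (rule primes_coprime)
    then have c1: "coprime (int r ^ t) (int p)" by simp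
    have "coprime (N * int r ^ t) (int p)" using N(1) c1 by simp
    moreover have "zmul (N * int r ^ t) (b r) = 0"
      by (simp only: zmul_mult zmul_power_nmul t zmul_zero)
    moreover have "zmul (N * int r ^ t) (sum b F) = zmul (N * int r ^ t) (if p \<in> insert r F then b p else 0)"
    proof -
      have "zmul (N * int r ^ t) (sum b F) = zmul (int r ^ t) (zmul N (sum b F))"
        by (simp only: zmul_mult[symmetric] mult.commute)
      also have "\<dots> = zmul (int r ^ t) (zmul N (if p \<in> F then b p else 0))" using N(2) by simp
      also have "\<dots> = zmul (N * int r ^ t) (if p \<in> F then b p else 0)"
        by (simp only: zmul_mult[symmetric] mult.commute)
      finally show ?thesis using False by simp
    qed
    ultimately show ?thesis using sb by (intro exI[of _ "N * int r ^ t"]) (simp add: zmul_distrib)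
  qed
qed

lemma proj2:
  fixes b :: "nat \<Rightarrow> 'a::ab_group_add"
  assumes F: "finite F" and b: "\<forall>r\<in>F. prime r \<and> b r \<in> primary r" and p: "prime p"
    and q: "prime q" "q \<noteq> p" "e \<in> primary q"
  shows "\<exists>N. coprime N (int p) \<and> zmul N (sum b F + e) = zmul N (if p \<in> F then b p else 0)"
proof -
  obtain N where N: "coprime N (int p)" "zmul N (sum b F) = zmul N (if p \<in> F then b p else 0)"
    using proj[OF F b p] by blast
  obtain t where t: "kill q t e" using q(3) by (auto simp: primary_iff)
  have "coprime q p" using q(1) p q(2) by (rule primes_coprime)
  then have c1: "coprime (int q ^ t) (int p)" by simp
  have "coprime (N * int q ^ t) (int p)" using N(1) c1 by simp
  moreover have "zmul (N * int q ^ t) e = 0"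
    by (simp only: zmul_mult zmul_power_nmul t zmul_zero)
  moreover have "zmul (N * int q ^ t) (sum b F) = zmul (N * int q ^ t) (if p \<in> F then b p else 0)"
  proof -
    have "zmul (N * int q ^ t) (sum b F) = zmul (int q ^ t) (zmul N (sum b F))"
      by (simp only: zmul_mult[symmetric] mult.commute)
    also have "\<dots> = zmul (int q ^ t) (zmul N (if p \<in> F then b p else 0))" using N(2) by simp
    also have "\<dots> = zmul (N * int q ^ t) (if p \<in> F then b p else 0)"
      by (simp only: zmul_mult[symmetric] mult.commute)
    finally show ?thesis .
  qed
  ultimately show ?thesis by (intro exI[of _ "N * int q ^ t"]) (simp add: zmul_distrib)
qed

lemma fq_reps:
  assumes "finite_quot Y Z" "0 \<in> Z"
  shows "\<exists>R. finite R \<and> (\<forall>y\<in>Y. \<exists>r\<in>R. y - r \<in> Z)"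
proof -
  define C where "C = (\<lambda>y. (\<lambda>x. y + x) ` Z) ` Y"
  have fC: "finite C" using assms(1) by (simp add: finite_quot_def C_def)
  define rep where "rep D = (SOME y. y \<in> Y \<and> D = (\<lambda>x. y + x) ` Z)" for D
  have "\<forall>y\<in>Y. \<exists>r\<in>rep ` C. y - r \<in> Z"
  proof
    fix y assume y: "y \<in> Y"
    define D where "D = (\<lambda>x. y + x) ` Z"
    have DC: "D \<in> C" using y by (simp add: C_def D_def)
    have "\<exists>y'. y' \<in> Y \<and> D = (\<lambda>x. y' + x) ` Z" using y D_def by blast
    then have r: "rep D \<in> Y \<and> D = (\<lambda>x. rep D + x) ` Z" unfolding rep_def by (rule someI_ex)
    have "y \<in> D" using assms(2) D_def by force
    then obtain z where "z \<in> Z" "y = rep D + z" using r by blast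
    then have "y - rep D \<in> Z" by simp
    then show "\<exists>r\<in>rep ` C. y - r \<in> Z" using DC by blast
  qed
  then show ?thesis using fC by blast
qed

lemma fq_intro:
  assumes Z: "subgrp Z" and R: "finite R" and rep: "\<forall>y\<in>Y. \<exists>r\<in>R. y - r \<in> Z"
  shows "finite_quot Y Z"
proof -
  have "(\<lambda>y. (\<lambda>x. y + x) ` Z) ` Y \<subseteq> (\<lambda>r. (\<lambda>x. r + x) ` Z) ` R"
  proof
    fix D assume "D \<in> (\<lambda>y. (\<lambda>x. y + x) ` Z) ` Y"
    then obtain y where y: "y \<in> Y" "D = (\<lambda>x. y + x) ` Z" by blast
    obtain r where r: "r \<in> R" "y - r \<in> Z" using rep y(1) by blast
    have "(\<lambda>x. y + x) ` Z = (\<lambda>x. r + x) ` Z"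
    proof (intro equalityI subsetI)
      fix w assume "w \<in> (\<lambda>x. y + x) ` Z"
      then obtain z where z: "z \<in> Z" "w = y + z" by blast
      have "(y - r) + z \<in> Z" using subgrp_add[OF Z r(2) z(1)] .
      moreover have "w = r + ((y - r) + z)" using z by simp
      ultimately show "w \<in> (\<lambda>x. r + x) ` Z" by blast
    next
      fix w assume "w \<in> (\<lambda>x. r + x) ` Z"
      then obtain z where z: "z \<in> Z" "w = r + z" by blast
      have "z - (y - r) \<in> Z" using subgrp_diff[OF Z z(1) r(2)] .
      moreover have "w = y + (z - (y - r))" using z by simp
      ultimately show "w \<in> (\<lambda>x. y + x) ` Z" by blast
    qed
    then show "D \<in> (\<lambda>r. (\<lambda>x. r + x) ` Z) ` R" using y(2) r(1) by blast
  qed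
  then show ?thesis unfolding finite_quot_def using R by (meson finite_imageI finite_subset)
qed

lemma fq_comb:
  assumes Z: "subgrp Z" and B: "finite B"
    and fq: "\<forall>p\<in>B. finite_quot (Y' p) (Z' p)"
    and Z': "\<forall>p\<in>B. 0 \<in> Z' p \<and> Z' p \<subseteq> Z"
    and dec: "\<forall>y\<in>Y. \<exists>w z. w \<in> Z \<and> (\<forall>p\<in>B. z p \<in> Y' p) \<and> y = w + sum z B"
  shows "finite_quot Y Z"
proof -
  have "\<forall>p\<in>B. \<exists>R. finite R \<and> (\<forall>y\<in>Y' p. \<exists>r\<in>R. y - r \<in> Z' p)"
    using fq Z' fq_reps by blast
  then obtain R where R: "\<forall>p\<in>B. finite (R p) \<and> (\<forall>y\<in>Y' p. \<exists>r\<in>R p. y - r \<in> Z' p)"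
    by metis
  define R0 where "R0 = (\<lambda>g. sum g B) ` (PiE B R)"
  have fR0: "finite R0" unfolding R0_def using B R by (intro finite_imageI finite_PiE) auto
  have "\<forall>y\<in>Y. \<exists>r\<in>R0. y - r \<in> Z"
  proof
    fix y assume "y \<in> Y"
    then obtain w z where wz: "w \<in> Z" "\<forall>p\<in>B. z p \<in> Y' p" "y = w + sum z B" using dec by blast
    have "\<forall>p\<in>B. \<exists>r\<in>R p. z p - r \<in> Z' p" using R wz(2) by blast
    then obtain g where g: "\<forall>p\<in>B. g p \<in> R p \<and> z p - g p \<in> Z' p" by metis
    have gin: "restrict g B \<in> PiE B R" using g by auto
    have sg: "sum (restrict g B) B = sum g B" by (rule sum.cong) auto
    have "y - sum g B = w + sum (\<lambda>p. z p - g p) B" using wz(3) by (simp add: sum_subtractf)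
    moreover have "sum (\<lambda>p. z p - g p) B \<in> Z" using g Z' by (intro subgrp_sum[OF Z]) auto
    ultimately have "y - sum g B \<in> Z" using subgrp_add[OF Z wz(1)] by simp
    moreover have "sum g B \<in> R0" unfolding R0_def using gin sg by (metis image_eqI)
    ultimately show "\<exists>r\<in>R0. y - r \<in> Z" by blast
  qed
  then show ?thesis using fq_intro[OF Z fR0] by blast
qed



lemma mult_into:
  assumes "is_multiplication_on p f" "c \<in> primary p" "subgrp X" "c \<in> X"
  shows "f c \<in> X"
proof -
  obtain \<alpha> where a: "\<forall>b n. kill p n b \<longrightarrow> f b = zmul (\<alpha> n) b"
    using assms(1) by (auto simp: is_multiplication_on_def)
  obtain n where "kill p n c" using assms(2) by (auto simp: primary_iff)
  then have "f c = zmul (\<alpha> n) c" using a by blast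
  then show ?thesis using subgrp_zmul[OF assms(3,4)] by simp
qed

lemma inv_mult_into:
  assumes p: "prime p" and f: "endom f" and im: "is_inv_multiplication_on p f"
    and c: "c \<in> primary p" and X: "subgrp X" "c \<in> X"
  shows "c \<in> f ` X"
proof -
  obtain \<alpha> where a: "\<forall>b n. kill p n b \<longrightarrow> f b = zmul (\<alpha> n) b"
    using im by (auto simp: is_inv_multiplication_on_def is_multiplication_on_def)
  have inj: "inj_on f (primary p)" using im by (auto simp: is_inv_multiplication_on_def bij_betw_def)
  obtain n where n: "kill p n c" using c by (auto simp: primary_iff)
  have fc: "f c = zmul (\<alpha> n) c" using a n by blast
  show ?thesis
  proof (cases "coprime (\<alpha> n) (int p)")
    case True
    obtain M where M: "zmul (M * \<alpha> n) c = c" using coprime_inv[OF n True] by blast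
    have "c = f (zmul M c)" using M by (simp add: endom_zmul[OF f] fc zmul_mult)
    then show ?thesis using subgrp_zmul[OF X] by blast
  next
    case False
    have pr: "prime (int p)" using p by simp
    have "int p dvd \<alpha> n"
    proof (rule ccontr)
      assume "\<not> int p dvd \<alpha> n"
      then have "coprime (int p) (\<alpha> n)" using prime_imp_coprime[OF pr] by blast
      then show False using False by (simp add: coprime_commute)
    qed
    then obtain t where t: "\<alpha> n = int p * t" by (auto simp: dvd_def)
    have c0: "c = 0"
    proof (rule ccontr)
      assume cn: "c \<noteq> 0"
      define j where "j = (LEAST j. kill p j c)"
      have kj: "kill p j c" unfolding j_def using n by (rule LeastI)
      have j0: "j \<noteq> 0"
      proof
        assume "j = 0" then show False using kj cn by simp
      qed
      define w where "w = nmul (p ^ (j - 1)) c"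
      have wn: "w \<noteq> 0"
      proof
        assume "w = 0"
        then have "j \<le> j - 1" unfolding j_def w_def by (rule Least_le)
        then show False using j0 by simp
      qed
      have kw1: "nmul p w = 0"
        using kj j0 unfolding w_def nmul_mult[symmetric] power_Suc[symmetric] by simp
      have wz: "w = zmul (int (p ^ (j - 1))) c" by (simp add: w_def zmul_power_nmul)
      have kwn: "kill p n w" unfolding wz by (rule kill_zmul[OF n])
      have "f w = zmul (\<alpha> n) w" using a kwn by blast
      also have "\<dots> = zmul t (zmul (int p) w)" by (simp only: t zmul_mult[symmetric] mult.commute)
      also have "\<dots> = 0" using kw1 by simp
      finally have "f w = f 0" by (simp add: endom_0[OF f])
      moreover have "w \<in> primary p" using kwn by (auto simp: primary_iff)
      ultimately have "w = 0" using inj by (auto dest: inj_onD)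
      then show False using wn by simp
    qed
    show ?thesis using c0 X subgrpD0 endom_0[OF f] by (metis image_eqI)
  qed
qed

lemma endom_funpow: "endom f \<Longrightarrow> endom (f ^^ N)"
  by (induct N) (simp_all add: endom_def endom_add)

lemma inv_power_mult:
  assumes p: "prime p" and f: "endom f"
    and h: "\<And>a. a \<in> primary p \<Longrightarrow> \<exists>k. a = f (zmul k a)"
  shows "is_inv_multiplication_on p f"
proof -
  have pw: "\<exists>k. f a = zmul k a" if a: "a \<in> primary p" for a
  proof -
    obtain k0 where k0: "a = f (zmul k0 a)" using h[OF a] by blast
    then have k0': "a = zmul k0 (f a)" by (simp add: endom_zmul[OF f])
    obtain n where n: "kill p n a" using a by (auto simp: primary_iff)
    show ?thesis
    proof (cases "coprime k0 (int p)")
      case True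
      have "kill p n (f a)" using kill_endom[OF f n] .
      then obtain M where "zmul (M * k0) (f a) = f a" using coprime_inv True by blast
      then have "f a = zmul M a" using k0' by (simp add: zmul_mult)
      then show ?thesis by blast
    next
      case False
      have pr: "prime (int p)" using p by simp
      have "int p dvd k0"
      proof (rule ccontr)
        assume "\<not> int p dvd k0"
        then have "coprime (int p) k0" using prime_imp_coprime[OF pr] by blast
        then show False using False by (simp add: coprime_commute)
      qed
      then obtain t where t: "k0 = int p * t" by (auto simp: dvd_def)
      have it: "a = zmul (k0 ^ N) ((f ^^ N) a)" for N
      proof (induct N)
        case 0 then show ?case by simp
      next
        case (Suc N)
        have "(f ^^ N) a = (f ^^ N) (zmul k0 (f a))" using k0' by simp
        also have "\<dots> = zmul k0 ((f ^^ N) (f a))" by (rule endom_zmul[OF endom_funpow[OF f]])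
        also have "(f ^^ N) (f a) = (f ^^ Suc N) a" by (simp add: funpow_Suc_right del: funpow.simps)
        finally have eq: "(f ^^ N) a = zmul k0 ((f ^^ Suc N) a)" .
        have "a = zmul (k0 ^ N) ((f ^^ N) a)" by (rule Suc.hyps)
        also have "\<dots> = zmul (k0 ^ N) (zmul k0 ((f ^^ Suc N) a))" using eq by (rule arg_cong)
        also have "\<dots> = zmul (k0 ^ Suc N) ((f ^^ Suc N) a)"
          by (simp only: zmul_mult[symmetric] power_Suc2)
        finally show ?case .
      qed
      have "a = zmul (k0 ^ n) ((f ^^ n) a)" by (rule it)
      also have "\<dots> = (f ^^ n) (zmul (k0 ^ n) a)" by (rule endom_zmul[OF endom_funpow[OF f], symmetric])
      also have "zmul (k0 ^ n) a = zmul (t ^ n) (zmul (int p ^ n) a)"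
        by (simp only: t power_mult_distrib zmul_mult[symmetric] mult.commute)
      also have "\<dots> = 0" using n by (simp add: zmul_power_nmul)
      also have "(f ^^ n) 0 = 0" by (rule endom_0[OF endom_funpow[OF f]])
      finally have "a = 0" .
      then show ?thesis using endom_0[OF f] by (intro exI[of _ 0]) simp
    qed
  qed
  have mult: "is_multiplication_on p f" using power_mult[OF p f pw] by blast
  have inj: "inj_on f (primary p)"
  proof (rule inj_onI)
    fix x y :: 'a assume xy: "x \<in> primary p" "y \<in> primary p" "f x = f y"
    have cp: "x - y \<in> primary p" using xy by (simp add: primary_diff)
    have fc: "f (x - y) = 0" using xy(3) by (simp add: endom_diff[OF f])
    obtain k where "x - y = f (zmul k (x - y))" using h[OF cp] by blast
    then have "x - y = 0" using fc by (simp add: endom_zmul[OF f])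
    then show "x = y" by simp
  qed
  have "f ` primary p = primary p"
  proof (intro equalityI subsetI)
    fix y :: 'a assume "y \<in> f ` primary p"
    then show "y \<in> primary p" using primary_endom[OF f] by blast
  next
    fix y :: 'a assume y: "y \<in> primary p"
    obtain k where "y = f (zmul k y)" using h[OF y] by blast
    then show "y \<in> f ` primary p" using primary_zmul[OF y] by blast
  qed
  then show ?thesis using mult inj by (simp add: is_inv_multiplication_on_def bij_betw_def)
qed

definition span_of :: "nat set \<Rightarrow> (nat \<Rightarrow> 'a::ab_group_add) \<Rightarrow> 'a set" where
  "span_of P a = {sum b F | F b. finite F \<and> F \<subseteq> P \<and> (\<forall>r\<in>F. \<exists>k. b r = zmul k (a r))}"

lemma subgrp_span: "subgrp (span_of P a)"
  unfolding subgrp_def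
proof (intro conjI ballI)
  show "0 \<in> span_of P a" unfolding span_of_def by (intro CollectI exI[of _ "{}"]) auto
  fix x y assume "x \<in> span_of P a" "y \<in> span_of P a"
  then obtain F1 b1 F2 b2 where
    h1: "x = sum b1 F1" "finite F1" "F1 \<subseteq> P" "\<forall>r\<in>F1. \<exists>k. b1 r = zmul k (a r)" and
    h2: "y = sum b2 F2" "finite F2" "F2 \<subseteq> P" "\<forall>r\<in>F2. \<exists>k. b2 r = zmul k (a r)"
    unfolding span_of_def by blast
  define b where "b r = (if r \<in> F1 then b1 r else 0) - (if r \<in> F2 then b2 r else 0)" for r
  have fin: "finite (F1 \<union> F2)" using h1 h2 by simp
  have "sum b (F1 \<union> F2) = sum (\<lambda>r. if r \<in> F1 then b1 r else 0) (F1 \<union> F2)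
      - sum (\<lambda>r. if r \<in> F2 then b2 r else 0) (F1 \<union> F2)"
    unfolding b_def by (rule sum_subtractf)
  also have "\<dots> = sum b1 ((F1 \<union> F2) \<inter> F1) - sum b2 ((F1 \<union> F2) \<inter> F2)"
    by (simp only: sum.inter_restrict[OF fin])
  also have "\<dots> = x - y" using h1 h2 by (simp add: Int_absorb1)
  finally have s: "x - y = sum b (F1 \<union> F2)" by simp
  have "\<forall>r\<in>F1 \<union> F2. \<exists>k. b r = zmul k (a r)"
  proof
    fix r assume "r \<in> F1 \<union> F2"
    have "\<exists>k1. (if r \<in> F1 then b1 r else 0) = zmul k1 (a r)"
      using h1(4) by (cases "r \<in> F1") (auto intro: exI[of _ "0::int"])
    then obtain k1 where k1: "(if r \<in> F1 then b1 r else 0) = zmul k1 (a r)" by blast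
    have "\<exists>k2. (if r \<in> F2 then b2 r else 0) = zmul k2 (a r)"
      using h2(4) by (cases "r \<in> F2") (auto intro: exI[of _ "0::int"])
    then obtain k2 where k2: "(if r \<in> F2 then b2 r else 0) = zmul k2 (a r)" by blast
    have "b r = zmul (k1 - k2) (a r)" unfolding b_def k1 k2 by (simp add: zmul_diff)
    then show "\<exists>k. b r = zmul k (a r)" by blast
  qed
  then show "x - y \<in> span_of P a" unfolding span_of_def using s fin h1(3) h2(3) by blast
qed

lemma in_span: "p \<in> P \<Longrightarrow> a p \<in> span_of P a"
  unfolding span_of_def
  by (intro CollectI exI[of _ "{p}"] exI[of _ "\<lambda>_. a p"]) (auto intro: exI[of _ 1])



lemma inertial_bad_finite:
  fixes f :: "'a::ab_group_add \<Rightarrow> 'a"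
  assumes f: "endom f" and inr: "inertial f"
  shows "finite {p. prime p \<and> \<not> is_multiplication_on p f}"
proof (rule ccontr)
  define P where "P = {p. prime p \<and> \<not> is_multiplication_on p f}"
  assume inf: "infinite {p. prime p \<and> \<not> is_multiplication_on p f}"
  then have infP: "infinite P" by (simp add: P_def)
  have ex: "\<exists>a. a \<in> primary p \<and> (\<forall>k. f a \<noteq> zmul k a)" if "p \<in> P" for p
  proof (rule ccontr)
    assume "\<not> ?thesis"
    then have "\<And>a. a \<in> primary p \<Longrightarrow> \<exists>k. f a = zmul k a" by blast
    then have "is_multiplication_on p f" using power_mult[OF _ f] that by (auto simp: P_def)
    then show False using that by (simp add: P_def)
  qed
  define a where "a p = (SOME a. a \<in> primary p \<and> (\<forall>k. f a \<noteq> zmul k a))" for p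
  have a: "a p \<in> primary p \<and> (\<forall>k. f (a p) \<noteq> zmul k (a p))" if "p \<in> P" for p
    unfolding a_def using ex[OF that] by (rule someI_ex)
  define X where "X = span_of P a"
  have X: "subgrp X" unfolding X_def by (rule subgrp_span)
  have fq: "finite_quot (setsum (f ` X) X) X" using inr X by (simp add: inertial_on_def)
  define g where "g p = (\<lambda>x. f (a p) + x) ` X" for p
  have gsub: "g ` P \<subseteq> (\<lambda>y. (\<lambda>x. y + x) ` X) ` (setsum (f ` X) X)"
  proof
    fix C assume "C \<in> g ` P"
    then obtain p where p: "p \<in> P" "C = g p" by blast
    have "f (a p) = f (a p) + 0" by simp
    then have "f (a p) \<in> setsum (f ` X) X"
      unfolding setsum_def using in_span[OF p(1), of a] subgrpD0[OF X] X_def by blast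
    then show "C \<in> (\<lambda>y. (\<lambda>x. y + x) ` X) ` (setsum (f ` X) X)" using p(2) g_def by blast
  qed
  have "inj_on g P"
  proof (rule inj_onI)
    fix p q assume pq: "p \<in> P" "q \<in> P" "g p = g q"
    show "p = q"
    proof (rule ccontr)
      assume ne: "p \<noteq> q"
      have "f (a p) \<in> g p" using subgrpD0[OF X] by (force simp: g_def)
      then have "f (a p) \<in> g q" using pq(3) by simp
      then obtain x where x: "x \<in> X" "f (a p) = f (a q) + x" by (auto simp: g_def)
      then obtain F b where Fb: "x = sum b F" "finite F" "F \<subseteq> P" "\<forall>r\<in>F. \<exists>k. b r = zmul k (a r)"
        unfolding X_def span_of_def by blast
      have bF: "\<forall>r\<in>F. prime r \<and> b r \<in> primary r"
      proof
        fix r assume r: "r \<in> F"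
        then have rP: "r \<in> P" using Fb(3) by blast
        obtain k where "b r = zmul k (a r)" using Fb(4) r by blast
        then show "prime r \<and> b r \<in> primary r" using rP a[OF rP] primary_zmul by (auto simp: P_def)
      qed
      have pp: "prime p" "prime q" using pq by (auto simp: P_def)
      have eq: "f (a q) \<in> primary q" using a[OF pq(2)] primary_endom[OF f] by blast
      obtain N where N: "coprime N (int p)" "zmul N (sum b F + f (a q)) = zmul N (if p \<in> F then b p else 0)"
        using proj2[OF Fb(2) bF pp(1) pp(2) ne[symmetric] eq] by blast
      have fap: "f (a p) \<in> primary p" using a[OF pq(1)] primary_endom[OF f] by blast
      then obtain n where n: "kill p n (f (a p))" by (auto simp: primary_iff)
      obtain M where M: "zmul (M * N) (f (a p)) = f (a p)" using coprime_inv[OF n N(1)] by blast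
      have "\<exists>k. (if p \<in> F then b p else 0) = zmul k (a p)"
        using Fb(4) by (cases "p \<in> F") (auto intro: exI[of _ "0::int"])
      then obtain k where k: "(if p \<in> F then b p else 0) = zmul k (a p)" by blast
      have "f (a p) = zmul M (zmul N (sum b F + f (a q)))"
        using M x(2) Fb(1) by (simp add: zmul_mult add.commute)
      also have "\<dots> = zmul (M * N * k) (a p)" using N(2) k by (simp add: zmul_mult)
      finally show False using a[OF pq(1)] by blast
    qed
  qed
  moreover have "finite (g ` P)"
    using gsub fq unfolding finite_quot_def by (rule finite_subset)
  ultimately have "finite P" using finite_imageD by blast
  then show False using infP by simp
qed

lemma left_bad_finite:
  fixes f :: "'a::ab_group_add \<Rightarrow> 'a"
  assumes f: "endom f" and inr: "left_inertial f"
  shows "finite {p. prime p \<and> \<not> is_inv_multiplication_on p f}"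
proof (rule ccontr)
  define P where "P = {p. prime p \<and> \<not> is_inv_multiplication_on p f}"
  assume inf: "infinite {p. prime p \<and> \<not> is_inv_multiplication_on p f}"
  then have infP: "infinite P" by (simp add: P_def)
  have ex: "\<exists>a. a \<in> primary p \<and> (\<forall>k. a \<noteq> f (zmul k a))" if "p \<in> P" for p
  proof (rule ccontr)
    assume "\<not> ?thesis"
    then have "\<And>a. a \<in> primary p \<Longrightarrow> \<exists>k. a = f (zmul k a)" by blast
    then have "is_inv_multiplication_on p f" using inv_power_mult[OF _ f] that by (auto simp: P_def)
    then show False using that by (simp add: P_def)
  qed
  define a where "a p = (SOME a. a \<in> primary p \<and> (\<forall>k. a \<noteq> f (zmul k a)))" for p
  have a: "a p \<in> primary p \<and> (\<forall>k. a p \<noteq> f (zmul k (a p)))" if "p \<in> P" for p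
    unfolding a_def using ex[OF that] by (rule someI_ex)
  define X where "X = span_of P a"
  have X: "subgrp X" unfolding X_def by (rule subgrp_span)
  define Z where "Z = X \<inter> f ` X"
  have Z: "subgrp Z" unfolding Z_def using X subgrp_image[OF f X] by (rule subgrp_Int)
  have fq: "finite_quot X Z" using inr X by (simp add: left_inertial_on_def Z_def)
  define g where "g p = (\<lambda>x. a p + x) ` Z" for p
  have gsub: "g ` P \<subseteq> (\<lambda>y. (\<lambda>x. y + x) ` Z) ` X"
    using in_span[of _ P a] unfolding g_def X_def by blast
  have "inj_on g P"
  proof (rule inj_onI)
    fix p q assume pq: "p \<in> P" "q \<in> P" "g p = g q"
    show "p = q"
    proof (rule ccontr)
      assume ne: "p \<noteq> q"
      have "a p \<in> g p" using subgrpD0[OF Z] by (force simp: g_def)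
      then have "a p \<in> g q" using pq(3) by simp
      then obtain z where z: "z \<in> Z" "a p = a q + z" by (auto simp: g_def)
      then obtain x where x: "x \<in> X" "z = f x" by (auto simp: Z_def)
      then obtain F b where Fb: "x = sum b F" "finite F" "F \<subseteq> P" "\<forall>r\<in>F. \<exists>k. b r = zmul k (a r)"
        unfolding X_def span_of_def by blast
      have fx: "f x = sum (\<lambda>r. f (b r)) F" using Fb(1) by (simp add: endom_sum[OF f])
      have bF: "\<forall>r\<in>F. prime r \<and> f (b r) \<in> primary r"
      proof
        fix r assume r: "r \<in> F"
        then have rP: "r \<in> P" using Fb(3) by blast
        obtain k where "b r = zmul k (a r)" using Fb(4) r by blast
        then have "f (b r) \<in> primary r" using a[OF rP] primary_zmul primary_endom[OF f] by metis
        then show "prime r \<and> f (b r) \<in> primary r" using rP by (auto simp: P_def)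
      qed
      have pp: "prime p" "prime q" using pq by (auto simp: P_def)
      have eq: "a q \<in> primary q" using a[OF pq(2)] by blast
      obtain N where N: "coprime N (int p)"
        "zmul N (sum (\<lambda>r. f (b r)) F + a q) = zmul N (if p \<in> F then f (b p) else 0)"
        using proj2[OF Fb(2) bF pp(1) pp(2) ne[symmetric] eq] by blast
      have ap: "a p \<in> primary p" using a[OF pq(1)] by blast
      then obtain n where n: "kill p n (a p)" by (auto simp: primary_iff)
      obtain M where M: "zmul (M * N) (a p) = a p" using coprime_inv[OF n N(1)] by blast
      have "\<exists>k. (if p \<in> F then f (b p) else 0) = f (zmul k (a p))"
      proof (cases "p \<in> F")
        case True
        then obtain k where "b p = zmul k (a p)" using Fb(4) by blast
        then show ?thesis using True by auto
      next
        case False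
        then show ?thesis using endom_zmul[OF f] endom_0[OF f] by (intro exI[of _ 0]) simp
      qed
      then obtain k where k: "(if p \<in> F then f (b p) else 0) = f (zmul k (a p))" by blast
      have "a p = zmul M (zmul N (sum (\<lambda>r. f (b r)) F + a q))"
        using M z(2) x(2) fx by (simp add: zmul_mult add.commute)
      also have "\<dots> = f (zmul (M * N * k) (a p))" using N(2) k by (simp add: zmul_mult endom_zmul[OF f])
      finally show False using a[OF pq(1)] by blast
    qed
  qed
  moreover have "finite (g ` P)"
    using gsub fq unfolding finite_quot_def by (rule finite_subset)
  ultimately have "finite P" using finite_imageD by blast
  then show False using infP by simp
qed



lemma inertial_converse:
  fixes f :: "'a::ab_group_add \<Rightarrow> 'a"
  assumes per: "periodic_group TYPE('a)" and f: "endom f"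
    and H1: "\<forall>p. prime p \<longrightarrow> inertial_on (primary p) f"
    and H2: "finite {p. prime p \<and> \<not> is_multiplication_on p f}"
  shows "inertial f"
  unfolding inertial_on_def
proof (intro allI impI)
  fix X :: "'a set" assume "subgrp X \<and> X \<subseteq> UNIV"
  then have X: "subgrp X" by simp
  define B where "B = {p. prime p \<and> \<not> is_multiplication_on p f}"
  have B: "finite B" using H2 by (simp add: B_def)
  define Xp where "Xp p = X \<inter> primary p" for p
  have Xp: "subgrp (Xp p)" for p unfolding Xp_def using X subgrp_primary by (rule subgrp_Int)
  show "finite_quot (setsum (f ` X) X) X"
  proof (rule fq_comb[OF X B, where Y' = "\<lambda>p. setsum (f ` Xp p) (Xp p)" and Z' = Xp])
    show "\<forall>p\<in>B. finite_quot (setsum (f ` Xp p) (Xp p)) (Xp p)"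
    proof
      fix p assume "p \<in> B"
      then have "inertial_on (primary p) f" using H1 by (simp add: B_def)
      moreover have "Xp p \<subseteq> primary p" by (simp add: Xp_def)
      ultimately show "finite_quot (setsum (f ` Xp p) (Xp p)) (Xp p)"
        using Xp[of p] unfolding inertial_on_def by blast
    qed
    show "\<forall>p\<in>B. 0 \<in> Xp p \<and> Xp p \<subseteq> X" using Xp subgrpD0 by (auto simp: Xp_def)
    show "\<forall>y\<in>setsum (f ` X) X. \<exists>w z. w \<in> X \<and> (\<forall>p\<in>B. z p \<in> setsum (f ` Xp p) (Xp p)) \<and> y = w + sum z B"
    proof
      fix y assume "y \<in> setsum (f ` X) X"
      then obtain x x' where xx: "x \<in> X" "x' \<in> X" "y = f x + x'" by (auto simp: setsum_def)
      obtain S c where S: "finite S" "\<forall>p\<in>S. prime p \<and> c p \<in> primary p \<and> (\<exists>k. c p = zmul k x)"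
        "x = sum c S" using decomp[OF per, of x] by blast
      have cX: "c p \<in> Xp p" if "p \<in> S" for p
        using S(2) that subgrp_zmul[OF X xx(1)] by (auto simp: Xp_def)
      define w where "w = x' + sum (\<lambda>p. f (c p)) (S - B)"
      define z where "z p = (if p \<in> S then f (c p) else 0)" for p
      have "sum (\<lambda>p. f (c p)) (S - B) \<in> X"
      proof (rule subgrp_sum[OF X])
        fix p assume p: "p \<in> S - B"
        then have "is_multiplication_on p f" using S(2) by (auto simp: B_def)
        moreover have "c p \<in> primary p" "c p \<in> X" using cX[of p] p by (auto simp: Xp_def)
        ultimately show "f (c p) \<in> X" using mult_into X by blast
      qed
      then have wX: "w \<in> X" unfolding w_def using subgrp_add[OF X xx(2)] by blast
      have zY: "\<forall>p\<in>B. z p \<in> setsum (f ` Xp p) (Xp p)"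
      proof
        fix p assume "p \<in> B"
        show "z p \<in> setsum (f ` Xp p) (Xp p)"
        proof (cases "p \<in> S")
          case True
          have "z p = f (c p) + 0" using True by (simp add: z_def)
          then show ?thesis using cX[OF True] subgrpD0[OF Xp] unfolding setsum_def by blast
        next
          case False
          have "z p = f 0 + 0" using False endom_0[OF f] by (simp add: z_def)
          then show ?thesis using subgrpD0[OF Xp] unfolding setsum_def by blast
        qed
      qed
      have "f x = sum (\<lambda>p. f (c p)) S" using S(3) by (simp add: endom_sum[OF f])
      also have "\<dots> = sum (\<lambda>p. f (c p)) (S \<inter> B) + sum (\<lambda>p. f (c p)) (S - B)"
        using S(1) by (rule sum.Int_Diff)
      also have "sum (\<lambda>p. f (c p)) (S \<inter> B) = sum z B"
        unfolding z_def using sum.inter_restrict[OF B, of "\<lambda>p. f (c p)" S] by (simp add: Int_commute)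
      finally have "y = w + sum z B" using xx(3) by (simp add: w_def algebra_simps)
      then show "\<exists>w z. w \<in> X \<and> (\<forall>p\<in>B. z p \<in> setsum (f ` Xp p) (Xp p)) \<and> y = w + sum z B"
        using wX zY by blast
    qed
  qed
qed

lemma left_converse:
  fixes f :: "'a::ab_group_add \<Rightarrow> 'a"
  assumes per: "periodic_group TYPE('a)" and f: "endom f"
    and H1: "\<forall>p. prime p \<longrightarrow> left_inertial_on (primary p) f"
    and H2: "finite {p. prime p \<and> \<not> is_inv_multiplication_on p f}"
  shows "left_inertial f"
  unfolding left_inertial_on_def
proof (intro allI impI)
  fix X :: "'a set" assume "subgrp X \<and> X \<subseteq> UNIV"
  then have X: "subgrp X" by simp
  define B where "B = {p. prime p \<and> \<not> is_inv_multiplication_on p f}"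
  have B: "finite B" using H2 by (simp add: B_def)
  define Xp where "Xp p = X \<inter> primary p" for p
  have Xp: "subgrp (Xp p)" for p unfolding Xp_def using X subgrp_primary by (rule subgrp_Int)
  have fX: "subgrp (f ` X)" using subgrp_image[OF f X] .
  have Z: "subgrp (X \<inter> f ` X)" using X fX by (rule subgrp_Int)
  show "finite_quot X (X \<inter> f ` X)"
  proof (rule fq_comb[OF Z B, where Y' = Xp and Z' = "\<lambda>p. Xp p \<inter> f ` Xp p"])
    show "\<forall>p\<in>B. finite_quot (Xp p) (Xp p \<inter> f ` Xp p)"
    proof
      fix p assume "p \<in> B"
      then have "left_inertial_on (primary p) f" using H1 by (simp add: B_def)
      moreover have "Xp p \<subseteq> primary p" by (simp add: Xp_def)
      ultimately show "finite_quot (Xp p) (Xp p \<inter> f ` Xp p)"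
        using Xp[of p] unfolding left_inertial_on_def by blast
    qed
    show "\<forall>p\<in>B. 0 \<in> Xp p \<inter> f ` Xp p \<and> Xp p \<inter> f ` Xp p \<subseteq> X \<inter> f ` X"
      using Xp subgrpD0 subgrpD0[OF subgrp_image[OF f Xp]] by (auto simp: Xp_def)
    show "\<forall>y\<in>X. \<exists>w z. w \<in> X \<inter> f ` X \<and> (\<forall>p\<in>B. z p \<in> Xp p) \<and> y = w + sum z B"
    proof
      fix x assume xX: "x \<in> X"
      obtain S c where S: "finite S" "\<forall>p\<in>S. prime p \<and> c p \<in> primary p \<and> (\<exists>k. c p = zmul k x)"
        "x = sum c S" using decomp[OF per, of x] by blast
      have cX: "c p \<in> Xp p" if "p \<in> S" for p
        using S(2) that subgrp_zmul[OF X xX] by (auto simp: Xp_def)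
      define w where "w = sum c (S - B)"
      define z where "z p = (if p \<in> S then c p else 0)" for p
      have "w \<in> X" unfolding w_def using cX by (intro subgrp_sum[OF X]) (auto simp: Xp_def)
      moreover have "w \<in> f ` X" unfolding w_def
      proof (rule subgrp_sum[OF fX])
        fix p assume p: "p \<in> S - B"
        then have "is_inv_multiplication_on p f" "prime p" using S(2) by (auto simp: B_def)
        moreover have "c p \<in> primary p" "c p \<in> X" using cX[of p] p by (auto simp: Xp_def)
        ultimately show "c p \<in> f ` X" using inv_mult_into[OF _ f _ _ X] by blast
      qed
      ultimately have wZ: "w \<in> X \<inter> f ` X" by blast
      have zY: "\<forall>p\<in>B. z p \<in> Xp p" using cX subgrpD0[OF Xp] by (auto simp: z_def)
      have "x = sum c (S \<inter> B) + sum c (S - B)" using S(1,3) by (simp add: sum.Int_Diff[symmetric])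
      also have "sum c (S \<inter> B) = sum z B"
        unfolding z_def using sum.inter_restrict[OF B, of c S] by (simp add: Int_commute)
      finally have "x = w + sum z B" by (simp add: w_def algebra_simps)
      then show "\<exists>w z. w \<in> X \<inter> f ` X \<and> (\<forall>p\<in>B. z p \<in> Xp p) \<and> x = w + sum z B"
        using wZ zY by blast
    qed
  qed
qed

theorem proposition3p2:
  fixes \<phi> :: "'a::ab_group_add \<Rightarrow> 'a"
  assumes "periodic_group TYPE('a)"
    and "endom \<phi>"
  shows "(inertial \<phi> \<longleftrightarrow>
            (\<forall>p. prime p \<longrightarrow> inertial_on (primary p) \<phi>) \<and>
            finite {p. prime p \<and> \<not> is_multiplication_on p \<phi>})
       \<and> (left_inertial \<phi> \<longleftrightarrow>
            (\<forall>p. prime p \<longrightarrow> left_inertial_on (primary p) \<phi>) \<and>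
            finite {p. prime p \<and> \<not> is_inv_multiplication_on p \<phi>})"
proof (rule conjI)
  show "inertial \<phi> \<longleftrightarrow>
            (\<forall>p. prime p \<longrightarrow> inertial_on (primary p) \<phi>) \<and>
            finite {p. prime p \<and> \<not> is_multiplication_on p \<phi>}"
  proof (rule iffI)
    assume h: "inertial \<phi>"
    show "(\<forall>p. prime p \<longrightarrow> inertial_on (primary p) \<phi>) \<and> finite {p. prime p \<and> \<not> is_multiplication_on p \<phi>}"
      using h inertial_bad_finite[OF assms(2) h] by (auto simp: inertial_on_def)
  next
    assume "(\<forall>p. prime p \<longrightarrow> inertial_on (primary p) \<phi>) \<and> finite {p. prime p \<and> \<not> is_multiplication_on p \<phi>}"
    then show "inertial \<phi>" using inertial_converse[OF assms] by blast
  qed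
next
  show "left_inertial \<phi> \<longleftrightarrow>
            (\<forall>p. prime p \<longrightarrow> left_inertial_on (primary p) \<phi>) \<and>
            finite {p. prime p \<and> \<not> is_inv_multiplication_on p \<phi>}"
  proof (rule iffI)
    assume h: "left_inertial \<phi>"
    show "(\<forall>p. prime p \<longrightarrow> left_inertial_on (primary p) \<phi>) \<and> finite {p. prime p \<and> \<not> is_inv_multiplication_on p \<phi>}"
      using h left_bad_finite[OF assms(2) h] by (auto simp: left_inertial_on_def)
  next
    assume "(\<forall>p. prime p \<longrightarrow> left_inertial_on (primary p) \<phi>) \<and> finite {p. prime p \<and> \<not> is_inv_multiplication_on p \<phi>}"
    then show "left_inertial \<phi>" using left_converse[OF assms] by blast
  qed
qed

end
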